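(* Let $n\ge1$, let $f_1,\dots,f_n:\mathbb{R}^d\to\mathbb{R}$ be $L$-smooth (i.e. $\|\nabla f_i(x)-\nabla f_i(y)\|\le L\|x-y\|$ for all $x,y$), and $f=\frac1n\sum_i f_i$. Let $x_0,\dots,x_T$ and $\nabla_0,\dots,\nabla_{T-1}$ be the iterates and gradient estimators produced by AdaSpider (described in the context) with input $x_0$, $\beta_0>0$, $G_0>0$. Then there is an absolute constant $C>0$ such that \[ \mathbb{E}\Big[\sum_{t=0}^{T-1}\|\nabla_t-\nabla f(x_t)\|\Big]\le C\,\frac{L\,n^{1/4}\sqrt T}{\beta_0}\sqrt{\log\!\Big(1+nT\Big(\frac{L}{\beta_0G_0}+\frac{\|\nabla f(x_0)\|}{G_0}\Big)\Big)}. \]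
   Context: $\|\cdot\|$ is the Euclidean norm. AdaSpider: input $x_0\in\mathbb{R}^d$, $\beta_0>0$, $G_0>0$, horizon $T\ge1$. For $t=0,1,\dots,T-1$: if $t \bmod n=0$, set $\nabla_t:=\nabla f(x_t)$; otherwise pick $i_t\in\{1,\dots,n\}$ uniformly at random (independently of the past) and set $\nabla_t:=\nabla f_{i_t}(x_t)-\nabla f_{i_t}(x_{t-1})+\nabla_{t-1}$. Then set $\gamma_t:=1\big/\big(n^{1/4}\beta_0\sqrt{n^{1/2}G_0^2+\sum_{s=0}^t\|\nabla_s\|^2}\big)$ and $x_{t+1}:=x_t-\gamma_t\nabla_t$. *)

theory Defs
  imports Complex_Main "HOL-Library.FuncSet"
begin

text \<open>Vectors of R^d are encoded as functions nat => real vanishing at coordinates >= d,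
  so that the dimension d can be quantified inside the statement (the constant C must be
  independent of d).\<close>

definition Rd :: "nat \<Rightarrow> (nat \<Rightarrow> real) set" where
  "Rd d = {x. \<forall>i\<ge>d. x i = 0}"

definition vnorm :: "nat \<Rightarrow> (nat \<Rightarrow> real) \<Rightarrow> real" where
  "vnorm d x = sqrt (\<Sum>i<d. (x i)^2)"

definition vinner :: "nat \<Rightarrow> (nat \<Rightarrow> real) \<Rightarrow> (nat \<Rightarrow> real) \<Rightarrow> real" where
  "vinner d x y = (\<Sum>i<d. x i * y i)"

definition is_gradient :: "nat \<Rightarrow> ((nat \<Rightarrow> real) \<Rightarrow> real) \<Rightarrow> ((nat \<Rightarrow> real) \<Rightarrow> (nat \<Rightarrow> real)) \<Rightarrow> bool" where
  "is_gradient d fn gr \<longleftrightarrow>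
     (\<forall>x\<in>Rd d. gr x \<in> Rd d \<and>
        (\<forall>\<epsilon>>0. \<exists>\<delta>>0. \<forall>h\<in>Rd d. 0 < vnorm d h \<and> vnorm d h < \<delta> \<longrightarrow>
           \<bar>fn (\<lambda>j. x j + h j) - fn x - vinner d (gr x) h\<bar> \<le> \<epsilon> * vnorm d h))"

definition lipschitz_grad :: "nat \<Rightarrow> real \<Rightarrow> ((nat \<Rightarrow> real) \<Rightarrow> (nat \<Rightarrow> real)) \<Rightarrow> bool" where
  "lipschitz_grad d L gr \<longleftrightarrow>
     (\<forall>x\<in>Rd d. \<forall>y\<in>Rd d. vnorm d (\<lambda>j. gr x j - gr y j) \<le> L * vnorm d (\<lambda>j. x j - y j))"

text \<open>Step size with accumulated squared norms S = sum_{s<=t} ||nabla_s||^2.\<close>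
definition ada_step :: "nat \<Rightarrow> real \<Rightarrow> real \<Rightarrow> real \<Rightarrow> real" where
  "ada_step n \<beta>0 G0 S = 1 / (root 4 (real n) * \<beta>0 * sqrt (sqrt (real n) * G0^2 + S))"

text \<open>Component gradients g i (i < n, 0-based), full gradient gf,
  index sequence \<omega> (\<omega> t is the index i_t drawn at step t).
  adaspider ... t = (x_t, x_{t+1}, nabla_t, sum_{s<=t} ||nabla_s||^2).\<close>
fun adaspider :: "nat \<Rightarrow> nat \<Rightarrow> ((nat \<Rightarrow> real) \<Rightarrow> (nat \<Rightarrow> real))
    \<Rightarrow> (nat \<Rightarrow> (nat \<Rightarrow> real) \<Rightarrow> (nat \<Rightarrow> real)) \<Rightarrow> real \<Rightarrow> real \<Rightarrow> (nat \<Rightarrow> real)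
    \<Rightarrow> (nat \<Rightarrow> nat) \<Rightarrow> nat
    \<Rightarrow> (nat \<Rightarrow> real) \<times> (nat \<Rightarrow> real) \<times> (nat \<Rightarrow> real) \<times> real" where
  "adaspider n d gf g \<beta>0 G0 x0 \<omega> 0 =
     (let D = gf x0; S = (vnorm d D)^2; \<gamma> = ada_step n \<beta>0 G0 S
      in (x0, (\<lambda>j. x0 j - \<gamma> * D j), D, S))"
| "adaspider n d gf g \<beta>0 G0 x0 \<omega> (Suc t) =
     (case adaspider n d gf g \<beta>0 G0 x0 \<omega> t of (xp, x, D, S) \<Rightarrow>
       (let D' = (if Suc t mod n = 0 then gf x
                  else (\<lambda>j. g (\<omega> (Suc t)) x j - g (\<omega> (Suc t)) xp j + D j));
            S' = S + (vnorm d D')^2;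
            \<gamma> = ada_step n \<beta>0 G0 S'
        in (x, (\<lambda>j. x j - \<gamma> * D' j), D', S')))"

definition ada_x where
  "ada_x n d gf g \<beta>0 G0 x0 \<omega> t = fst (adaspider n d gf g \<beta>0 G0 x0 \<omega> t)"

definition ada_grad where
  "ada_grad n d gf g \<beta>0 G0 x0 \<omega> t = fst (snd (snd (adaspider n d gf g \<beta>0 G0 x0 \<omega> t)))"

text \<open>Expectation over independent uniform indices i_1,...,i_{T-1} in {0..<n}
  (uniform average over all index sequences; unused coordinates do not matter).\<close>
definition expect_idx :: "nat \<Rightarrow> nat \<Rightarrow> ((nat \<Rightarrow> nat) \<Rightarrow> real) \<Rightarrow> real" where
  "expect_idx n T X = (\<Sum>\<omega>\<in>{..<T} \<rightarrow>\<^sub>E {..<n}. X \<omega>) / real (card ({..<T} \<rightarrow>\<^sub>E {..<n}))"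

end

theory Submission
  imports Defs "HOL-Analysis.L2_Norm" "HOL-Analysis.Convex"
begin


lemma vnorm_L2: "vnorm d x = L2_set x {..<d}"
  by (simp add: vnorm_def L2_set_def)

lemma vnorm_nonneg: "0 \<le> vnorm d x"
  by (simp add: vnorm_def sum_nonneg)

lemma vnorm_add: "vnorm d (\<lambda>j. x j + y j) \<le> vnorm d x + vnorm d y"
  unfolding vnorm_L2 by (rule L2_set_triangle_ineq)

lemma vnorm_tri: "vnorm d (\<lambda>j. x j - z j) \<le> vnorm d (\<lambda>j. x j - y j) + vnorm d (\<lambda>j. y j - z j)"
  using vnorm_add[of d "\<lambda>j. x j - y j" "\<lambda>j. y j - z j"] by simp

lemma vnorm_scale: "vnorm d (\<lambda>j. c * x j) = \<bar>c\<bar> * vnorm d x"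
proof -
  have "(\<Sum>i<d. (c * x i)^2) = c^2 * (\<Sum>i<d. (x i)^2)"
    by (simp add: power_mult_distrib sum_distrib_left)
  then show ?thesis by (simp add: vnorm_def real_sqrt_mult)
qed

lemma vnorm_zero: "vnorm d (\<lambda>j. 0) = 0"
  by (simp add: vnorm_def)

lemma vnorm_sq: "(vnorm d x)^2 = vinner d x x"
  by (simp add: vnorm_def vinner_def sum_nonneg power2_eq_square)

lemma vnorm_add_sq: "(vnorm d (\<lambda>j. a j + b j))^2 = (vnorm d a)^2 + 2 * vinner d a b + (vnorm d b)^2"
  unfolding vnorm_sq vinner_def
  by (simp add: algebra_simps sum.distrib sum_distrib_left)

lemma vinner_sum_right: "vinner d a (\<lambda>j. \<Sum>i\<in>A. h i j) = (\<Sum>i\<in>A. vinner d a (h i))"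
  unfolding vinner_def by (simp add: sum_distrib_left sum.swap[of _ A])

lemma vnorm_sum: "vnorm d (\<lambda>j. \<Sum>i\<in>A. h i j) \<le> (\<Sum>i\<in>A. vnorm d (h i))"
proof (induction A rule: infinite_finite_induct)
  case (infinite A) then show ?case by (simp add: vnorm_zero)
next
  case empty then show ?case by (simp add: vnorm_zero)
next
  case (insert a A)
  have "vnorm d (\<lambda>j. \<Sum>i\<in>insert a A. h i j) = vnorm d (\<lambda>j. h a j + (\<Sum>i\<in>A. h i j))"
    using insert by simp
  also have "\<dots> \<le> vnorm d (h a) + vnorm d (\<lambda>j. \<Sum>i\<in>A. h i j)"
    using vnorm_add[of d "h a"] by (metis (no_types))
  also have "\<dots> \<le> vnorm d (h a) + (\<Sum>i\<in>A. vnorm d (h i))" using insert by simp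
  finally show ?case using insert by simp
qed

lemma sq_sum_le: "finite A \<Longrightarrow> (\<Sum>i\<in>A. f i)^2 \<le> real (card A) * (\<Sum>i\<in>A. (f i)^2)"
proof -
  assume fA: "finite A"
  have "(\<Sum>i\<in>A. f i * 1)^2 \<le> (\<Sum>i\<in>A. (f i)^2) * (\<Sum>i\<in>A. 1^2)"
    by (rule Cauchy_Schwarz_ineq_sum)
  then show ?thesis by (simp add: mult.commute)
qed



lemma ln_le_2sqrt: assumes "0 \<le> R" shows "ln (1 + R) \<le> 2 * sqrt R"
proof -
  have s: "(sqrt R)^2 = R" using assms by simp
  have "1 + R \<le> (1 + sqrt R)^2" using s assms by (simp add: power2_eq_square algebra_simps)
  then have "ln (1 + R) \<le> ln ((1 + sqrt R)^2)" using assms by (intro ln_mono) auto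
  also have "\<dots> = 2 * ln (1 + sqrt R)" by (simp add: ln_realpow)
  also have "\<dots> \<le> 2 * sqrt R" using ln_add_one_self_le_self[of "sqrt R"] assms by simp
  finally show ?thesis .
qed

lemma log_bound:
  fixes R Z :: real
  assumes R0: "0 \<le> R" and Z0: "0 \<le> Z" and h: "R \<le> 2*Z^2 + 18*Z^2 * ln (1 + R)"
  shows "ln (1 + R) \<le> 3000 * ln (1 + Z)"
proof -
  define s where "s = sqrt R"
  have s0: "0 \<le> s" and sR: "s^2 = R" using R0 by (auto simp: s_def)
  have "R \<le> 2*Z^2 + 36*Z^2*s"
  proof -
    have "18*Z^2 * ln (1 + R) \<le> 18*Z^2 * (2*s)"
      using ln_le_2sqrt[OF R0] unfolding s_def by (intro mult_left_mono) auto
    then show ?thesis using h by linarith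
  qed
  then have hs: "s^2 \<le> 2*Z^2 + 36*Z^2*s" using sR by simp
  have sb: "s \<le> 36*Z^2 + 2*Z"
  proof (rule ccontr)
    assume "\<not> ?thesis"
    then have c: "s > 36*Z^2 + 2*Z" by simp
    have p: "36*Z^2 + 2*Z \<ge> 0" using Z0 by simp
    have "s * s > s * (36*Z^2 + 2*Z)" using c p
      by (intro mult_strict_left_mono) auto
    moreover have "s * (2*Z) \<ge> (2*Z)*(2*Z)"
    proof -
      have "0 \<le> 36*Z^2" by simp
      then have "2*Z \<le> s" using c by linarith
      then show ?thesis using Z0 by (intro mult_right_mono) auto
    qed
    moreover have "0 \<le> Z * s" using Z0 s0 by simp
    ultimately show False using hs by (simp add: power2_eq_square algebra_simps)
  qed
  show ?thesis
  proof (cases "Z \<le> 1")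
    case True
    have "Z^2 \<le> Z" using True Z0 using mult_left_le_one_le[of Z Z] by (simp add: power2_eq_square)
    then have "s \<le> 38 * Z" using sb by linarith
    then have "R \<le> (38*Z)^2" using sR s0 by (metis power_mono)
    then have a: "ln (1+R) \<le> 1444 * Z^2"
      using ln_add_one_self_le_self[OF R0] by (simp add: power_mult_distrib)
    have "ln (1+Z) \<ge> 1 - 1/(1+Z)"
      using ln_le_minus_one[of "1/(1+Z)"] Z0 by (simp add: ln_div)
    moreover have "1 - 1/(1+Z) \<ge> Z/2" using Z0 True mult_left_le_one_le[of Z Z] by (simp add: field_simps)
    moreover have "Z/2 \<ge> Z^2/2" using Z0 True using mult_left_le_one_le[of Z Z] by (simp add: power2_eq_square)
    ultimately have "ln (1+Z) \<ge> Z^2/2" by linarith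
    moreover have "ln (1+Z) \<ge> 0" using Z0 by simp
    ultimately show ?thesis using a by linarith
  next
    case False
    have "Z \<le> Z^2" using False by (simp add: power2_eq_square)
    then have "s \<le> 38 * Z^2" using sb by linarith
    then have "R \<le> (38*Z^2)^2" using sR s0 by (metis power_mono)
    also have "(38*Z^2)^2 = 1444 * Z^4" by (simp add: power_mult_distrib flip: power_mult)
    finally have R4: "R \<le> 1444 * Z^4" .
    have "1 \<le> Z^4" using False by simp
    then have "1 + R \<le> 1445 * Z^4" using R4 by linarith
    also have "\<dots> \<le> 2^11 * Z^4" by simp
    also have "\<dots> \<le> (1+Z)^11 * (1+Z)^4"
      using False by (intro mult_mono power_mono) auto
    also have "\<dots> = (1+Z)^15" by (simp add: power_add[symmetric])
    finally have "ln (1+R) \<le> ln ((1+Z)^15)" using R0 by (intro ln_mono) auto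
    also have "\<dots> = 15 * ln (1+Z)" using Z0 by (simp add: ln_realpow)
    finally have "ln (1+R) \<le> 15 * ln (1+Z)" .
    moreover have "ln (1+Z) \<ge> 0" using Z0 by simp
    ultimately show ?thesis by linarith
  qed
qed



lemma telescope:
  fixes a :: "nat \<Rightarrow> real"
  assumes c0: "0 < c" and a0: "\<And>q. 0 \<le> a q"
  shows "(\<Sum>s<T. a s / (c + (\<Sum>q<Suc s. a q))) \<le> ln (c + (\<Sum>q<T. a q)) - ln c"
proof (induction T)
  case 0 then show ?case by simp
next
  case (Suc T)
  define y where "y = c + (\<Sum>q<T. a q)"
  define x where "x = c + (\<Sum>q<Suc T. a q)"
  have y0: "0 < y" unfolding y_def using c0 a0 by (simp add: add_pos_nonneg sum_nonneg)
  have xy: "x = y + a T" unfolding x_def y_def by simp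
  have x0: "0 < x" using xy y0 a0[of T] by simp
  have "ln (y/x) \<le> y/x - 1" using ln_le_minus_one[of "y/x"] x0 y0 by simp
  then have "ln y - ln x \<le> y/x - 1" using x0 y0 by (simp add: ln_div)
  moreover have "y/x - 1 = - (a T / x)" using xy x0 by (simp add: field_simps)
  ultimately have "a T / x \<le> ln x - ln y" by linarith
  then show ?case using Suc unfolding x_def y_def by simp
qed

lemma root4_sq: "0 \<le> x \<Longrightarrow> (root 4 x)^2 = sqrt x"
proof -
  assume x0: "0 \<le> x"
  have "(root 4 x)^4 = x" using x0 by (simp add: real_root_pow_pos2)
  then have "((root 4 x)^2)^2 = x" by (simp flip: power_mult)
  then show ?thesis using x0 by (metis real_sqrt_unique zero_le_power2)
qed

lemma ada_step_sq:
  assumes "0 < \<beta>0" "0 < G0" "0 \<le> S" "1 \<le> n"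
  shows "(ada_step n \<beta>0 G0 S)^2 = 1 / (sqrt (real n) * \<beta>0^2 * (sqrt (real n) * G0^2 + S))"
proof -
  have p: "0 \<le> sqrt (real n) * G0^2 + S" using assms by simp
  show ?thesis unfolding ada_step_def
    using assms p by (simp add: power_divide power_mult_distrib root4_sq)
qed

lemma ada_step_nonneg: "0 \<le> \<beta>0 \<Longrightarrow> 0 \<le> S \<Longrightarrow> 0 \<le> ada_step n \<beta>0 G0 S"
  unfolding ada_step_def by simp

lemma det_bound:
  fixes u :: "nat \<Rightarrow> real"
  assumes n1: "1 \<le> n" and T1: "1 \<le> T" and L0: "0 \<le> L" and b0: "0 < \<beta>0" and G0: "0 < G0"
    and M0: "0 \<le> M" and u0: "\<And>t. 0 \<le> u t"
    and ub: "\<And>t. t < T \<Longrightarrow> u t \<le> M + 3*L*(\<Sum>s<t. ada_step n \<beta>0 G0 (\<Sum>q<Suc s. (u q)^2) * u s)"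
  shows "(\<Sum>s<T. (ada_step n \<beta>0 G0 (\<Sum>q<Suc s. (u q)^2) * u s)^2)
           \<le> 3000 * ln (1 + T*(L/(\<beta>0*G0) + M/G0)) / (sqrt n * \<beta>0^2)"
proof -
  define w where "w s = ada_step n \<beta>0 G0 (\<Sum>q<Suc s. (u q)^2) * u s" for s
  define Q where "Q = (\<Sum>s<T. (w s)^2)"
  define SS where "SS = (\<Sum>q<T. (u q)^2)"
  define c where "c = sqrt (real n) * G0^2"
  define R where "R = SS / c"
  define a where "a = M / G0"
  define b where "b = L / (\<beta>0 * G0)"
  define Z where "Z = T * (b + a)"
  have sn: "1 \<le> sqrt (real n)" using n1 by simp
  have c0: "0 < c" unfolding c_def using sn G0 by simp
  have SS0: "0 \<le> SS" unfolding SS_def by (simp add: sum_nonneg)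
  have R0: "0 \<le> R" unfolding R_def using SS0 c0 by simp
  have a0: "0 \<le> a" and bb0: "0 \<le> b" unfolding a_def b_def using M0 G0 L0 b0 by auto
  have Z0: "0 \<le> Z" unfolding Z_def using a0 bb0 by simp
  have Mdef: "M = a * G0" and Ldef: "L = b * \<beta>0 * G0" unfolding a_def b_def using G0 b0 by auto
  have wsq: "(w s)^2 = (1 / (sqrt n * \<beta>0^2)) * ((u s)^2 / (c + (\<Sum>q<Suc s. (u q)^2)))" for s
    unfolding w_def c_def power_mult_distrib
    by (subst ada_step_sq) (use b0 G0 n1 in \<open>auto simp: sum_nonneg\<close>)
  have "Q = (1 / (sqrt n * \<beta>0^2)) * (\<Sum>s<T. (u s)^2 / (c + (\<Sum>q<Suc s. (u q)^2)))"
    unfolding Q_def wsq by (simp add: sum_distrib_left)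
  also have "\<dots> \<le> (1 / (sqrt n * \<beta>0^2)) * (ln (c + SS) - ln c)"
    unfolding SS_def using telescope[OF c0, of "\<lambda>q. (u q)^2" T] b0 sn
    by (intro mult_left_mono) auto
  also have "ln (c + SS) - ln c = ln (1 + R)"
  proof -
    have "1 + R = (c + SS) / c" unfolding R_def using c0 by (simp add: field_simps)
    then show ?thesis using c0 SS0 by (simp add: ln_div)
  qed
  finally have Qb: "Q \<le> ln (1 + R) / (sqrt n * \<beta>0^2)" by simp
  have lnR0: "0 \<le> ln (1 + R)" using R0 by simp
  have Q0: "0 \<le> Q" unfolding Q_def by (simp add: sum_nonneg)
  have Qb2: "\<beta>0^2 * Q \<le> ln (1 + R)"
  proof -
    have "\<beta>0^2 * Q \<le> \<beta>0^2 * (ln (1 + R) / (sqrt n * \<beta>0^2))"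
      using Qb by (intro mult_left_mono) auto
    also have "\<dots> = ln (1+R) / sqrt n" using b0 by simp
    also have "\<dots> \<le> ln (1+R)" using sn lnR0 by (simp add: divide_le_eq mult_le_cancel_left1 mult_left_le)
    finally show ?thesis .
  qed
  have w0: "0 \<le> w s" for s unfolding w_def using u0 b0 by (simp add: ada_step_nonneg sum_nonneg)
  have P2: "(\<Sum>s<t. w s)^2 \<le> T * Q" if "t \<le> T" for t
  proof -
    have "(\<Sum>s<t. w s)^2 \<le> real t * (\<Sum>s<t. (w s)^2)"
      using sq_sum_le[of "{..<t}" w] by simp
    also have "\<dots> \<le> real T * Q"
      unfolding Q_def using that
      by (intro mult_mono sum_mono2) (auto simp: sum_nonneg)
    finally show ?thesis .
  qed
  have usq: "(u t)^2 \<le> 2*M^2 + 18*L^2*(T*Q)" if "t < T" for t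
  proof -
    define P where "P = (\<Sum>s<t. w s)"
    have P0: "0 \<le> P" unfolding P_def using w0 by (simp add: sum_nonneg)
    have "u t \<le> M + 3*L*P" using ub[OF that] unfolding P_def w_def by simp
    then have "(u t)^2 \<le> (M + 3*L*P)^2" using u0[of t] by (intro power_mono) auto
    also have "\<dots> \<le> 2*M^2 + 18*L^2*P^2"
    proof -
      have "(M + 3*L*P)^2 + (M - 3*L*P)^2 = 2*M^2 + 18*L^2*P^2"
        by (simp add: power2_eq_square algebra_simps)
      moreover have "0 \<le> (M - 3*L*P)^2" by simp
      ultimately show ?thesis by linarith
    qed
    also have "\<dots> \<le> 2*M^2 + 18*L^2*(T*Q)"
      using P2[of t] that unfolding P_def by (intro add_left_mono mult_left_mono) auto
    finally show ?thesis .
  qed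
  have "SS \<le> (\<Sum>q<T. 2*M^2 + 18*L^2*(T*Q))"
    unfolding SS_def by (intro sum_mono) (use usq in auto)
  also have "\<dots> = T * (2*M^2) + 18 * (b*T)^2 * G0^2 * (\<beta>0^2 * Q)"
    unfolding Ldef by (simp add: power_mult_distrib algebra_simps power2_eq_square)
  also have "\<dots> \<le> T * (2*M^2) + 18 * Z^2 * G0^2 * ln (1 + R)"
  proof -
    have "(b*T)^2 \<le> Z^2" unfolding Z_def using a0 bb0 by (intro power_mono) (auto simp: algebra_simps)
    then have "18 * (b*T)^2 * G0^2 * (\<beta>0^2 * Q) \<le> 18 * Z^2 * G0^2 * ln (1 + R)"
      using Qb2 Q0 by (intro mult_mono) auto
    then show ?thesis by simp
  qed
  also have "T * (2*M^2) \<le> 2 * Z^2 * G0^2"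
  proof -
    have "T * (2*M^2) = 2 * (T * a^2) * G0^2" unfolding Mdef by (simp add: power_mult_distrib)
    moreover have "T * a^2 \<le> (T*a)^2"
    proof -
      have "real T \<le> real T * real T" using T1 by (simp add: mult_le_cancel_left1)
      then have "T * a^2 \<le> (T * T) * a^2" by (intro mult_right_mono) auto
      then show ?thesis by (simp add: power_mult_distrib power2_eq_square mult_ac)
    qed
    moreover have "(T*a)^2 \<le> Z^2" unfolding Z_def using a0 bb0 by (intro power_mono) (auto simp: algebra_simps)
    ultimately have "T * a^2 \<le> Z^2" by linarith
    then have "2 * (T * a^2) * G0^2 \<le> 2 * Z^2 * G0^2" by (intro mult_right_mono) auto
    then show ?thesis using \<open>T * (2*M^2) = 2 * (T * a^2) * G0^2\<close> by linarith
  qed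
  finally have "SS \<le> G0^2 * (2*Z^2 + 18*Z^2 * ln (1 + R))" by (simp add: algebra_simps)
  then have "SS / G0^2 \<le> 2*Z^2 + 18*Z^2 * ln (1 + R)" using G0 by (simp add: field_simps)
  moreover have "R \<le> SS / G0^2" unfolding R_def c_def using SS0 sn G0
    by (intro divide_left_mono) auto
  ultimately have "R \<le> 2*Z^2 + 18*Z^2 * ln (1 + R)" by linarith
  from log_bound[OF R0 Z0 this] have "ln (1+R) \<le> 3000 * ln (1+Z)" .
  then have "Q \<le> 3000 * ln (1+Z) / (sqrt n * \<beta>0^2)"
    using Qb b0 sn by (smt (verit) divide_right_mono zero_le_power2 mult_nonneg_nonneg)
  then show ?thesis unfolding Q_def w_def Z_def a_def b_def by (simp add: algebra_simps)
qed



lemma vnorm_neg: "vnorm d (\<lambda>j. - x j) = vnorm d x"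
  using vnorm_scale[of d "-1" x] by simp

lemma vnorm_sub: "vnorm d (\<lambda>j. x j - y j) \<le> vnorm d x + vnorm d y"
  using vnorm_add[of d x "\<lambda>j. - y j"] vnorm_neg[of d y] by simp

lemma Rd_iff: "x \<in> Rd d \<longleftrightarrow> (\<forall>i\<ge>d. x i = 0)" by (simp add: Rd_def)

locale ada_setup =
  fixes n d T :: nat and L \<beta>0 G0 :: real and x0 :: "nat \<Rightarrow> real"
    and f :: "nat \<Rightarrow> (nat \<Rightarrow> real) \<Rightarrow> real"
    and g :: "nat \<Rightarrow> (nat \<Rightarrow> real) \<Rightarrow> (nat \<Rightarrow> real)"
    and gf :: "(nat \<Rightarrow> real) \<Rightarrow> (nat \<Rightarrow> real)"
  assumes n1: "1 \<le> n" and T1: "1 \<le> T" and L0: "0 \<le> L" and b0: "0 < \<beta>0" and G0p: "0 < G0"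
    and x0R: "x0 \<in> Rd d"
    and grad: "\<forall>i<n. is_gradient d (f i) (g i) \<and> lipschitz_grad d L (g i)"
    and gf_def: "gf = (\<lambda>x j. (1 / real n) * (\<Sum>i<n. g i x j))"
begin

abbreviation "st \<omega> t \<equiv> adaspider n d gf g \<beta>0 G0 x0 \<omega> t"
abbreviation "X \<omega> t \<equiv> ada_x n d gf g \<beta>0 G0 x0 \<omega> t"
abbreviation "GR \<omega> t \<equiv> ada_grad n d gf g \<beta>0 G0 x0 \<omega> t"
abbreviation "NX \<omega> t \<equiv> fst (snd (st \<omega> t))"
abbreviation "SS \<omega> t \<equiv> snd (snd (snd (st \<omega> t)))"
abbreviation "gam \<omega> t \<equiv> ada_step n \<beta>0 G0 (SS \<omega> t)"
abbreviation "Om \<equiv> {..<T} \<rightarrow>\<^sub>E {..<n}"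

lemma X0: "X \<omega> 0 = x0" by (simp add: ada_x_def Let_def)
lemma XSuc: "X \<omega> (Suc t) = NX \<omega> t"
  by (cases "st \<omega> t") (simp add: ada_x_def Let_def)
lemma GR0: "GR \<omega> 0 = gf x0" by (simp add: ada_grad_def Let_def)
lemma GRSuc: "GR \<omega> (Suc t) = (if Suc t mod n = 0 then gf (NX \<omega> t)
   else (\<lambda>j. g (\<omega> (Suc t)) (NX \<omega> t) j - g (\<omega> (Suc t)) (X \<omega> t) j + GR \<omega> t j))"
  by (cases "st \<omega> t") (simp add: ada_x_def ada_grad_def Let_def)
lemma NXe: "NX \<omega> t = (\<lambda>j. X \<omega> t j - gam \<omega> t * GR \<omega> t j)"
proof (cases t)
  case 0 then show ?thesis by (simp add: ada_x_def ada_grad_def Let_def)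
next
  case (Suc k) then show ?thesis
    by (cases "st \<omega> k") (simp add: ada_x_def ada_grad_def Let_def)
qed
lemma SSe: "SS \<omega> t = (\<Sum>q<Suc t. (vnorm d (GR \<omega> q))^2)"
proof (induction t)
  case 0 then show ?case by (simp add: ada_grad_def Let_def)
next
  case (Suc t) then show ?case
    by (cases "st \<omega> t") (simp add: ada_x_def ada_grad_def Let_def)
qed
lemma gam_nonneg: "0 \<le> gam \<omega> t"
  using b0 by (intro ada_step_nonneg) (auto simp: SSe sum_nonneg)

lemma dep: "(\<forall>s\<le>t. \<omega> s = \<omega>' s) \<Longrightarrow> st \<omega> t = st \<omega>' t"
proof (induction t)
  case 0 then show ?case by simp
next
  case (Suc t)
  then have "st \<omega> t = st \<omega>' t" by simp
  moreover have "\<omega> (Suc t) = \<omega>' (Suc t)" using Suc.prems by simp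
  ultimately show ?case by (cases "st \<omega>' t") (simp add: Let_def)
qed

lemma gR: "i < n \<Longrightarrow> x \<in> Rd d \<Longrightarrow> g i x \<in> Rd d"
  using grad by (auto simp: is_gradient_def)
lemma lipg: "i < n \<Longrightarrow> x \<in> Rd d \<Longrightarrow> y \<in> Rd d \<Longrightarrow>
    vnorm d (\<lambda>j. g i x j - g i y j) \<le> L * vnorm d (\<lambda>j. x j - y j)"
  using grad by (auto simp: lipschitz_grad_def)
lemma gfR: "x \<in> Rd d \<Longrightarrow> gf x \<in> Rd d"
  using gR unfolding gf_def Rd_iff by simp

lemma gf_lip: assumes "x \<in> Rd d" "y \<in> Rd d"
  shows "vnorm d (\<lambda>j. gf x j - gf y j) \<le> L * vnorm d (\<lambda>j. x j - y j)"
proof -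
  have "(\<lambda>j. gf x j - gf y j) = (\<lambda>j. (1/real n) * (\<Sum>i<n. g i x j - g i y j))"
    unfolding gf_def by (simp add: sum_subtractf algebra_simps)
  then have "vnorm d (\<lambda>j. gf x j - gf y j) = vnorm d (\<lambda>j. (1/real n) * (\<Sum>i<n. g i x j - g i y j))"
    by (simp only:)
  also have "\<dots> = (1/real n) * vnorm d (\<lambda>j. \<Sum>i<n. g i x j - g i y j)"
    by (subst vnorm_scale) simp
  also have "\<dots> \<le> (1/real n) * (\<Sum>i<n. vnorm d (\<lambda>j. g i x j - g i y j))"
    by (intro mult_left_mono vnorm_sum) auto
  also have "\<dots> \<le> (1/real n) * (\<Sum>i<n. L * vnorm d (\<lambda>j. x j - y j))"
    using lipg assms by (intro mult_left_mono sum_mono) auto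
  also have "\<dots> = L * vnorm d (\<lambda>j. x j - y j)" using n1 by simp
  finally show ?thesis .
qed

lemma xi_bound: assumes "i < n" "x \<in> Rd d" "y \<in> Rd d"
  shows "vnorm d (\<lambda>j. (g i x j - g i y j) - (gf x j - gf y j)) \<le> 2 * L * vnorm d (\<lambda>j. x j - y j)"
proof -
  have "vnorm d (\<lambda>j. (g i x j - g i y j) - (gf x j - gf y j))
     \<le> vnorm d (\<lambda>j. g i x j - g i y j) + vnorm d (\<lambda>j. gf x j - gf y j)"
    by (rule vnorm_sub)
  then show ?thesis using lipg[OF assms] gf_lip[OF assms(2,3)] by simp
qed

lemma Om_lt: "\<omega> \<in> Om \<Longrightarrow> s < T \<Longrightarrow> \<omega> s < n"
  by (auto simp: PiE_def Pi_def)

lemma inv: "\<omega> \<in> Om \<Longrightarrow> t < T \<Longrightarrow> X \<omega> t \<in> Rd d \<and> GR \<omega> t \<in> Rd d \<and> NX \<omega> t \<in> Rd d"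
proof (induction t)
  case 0
  have "gf x0 \<in> Rd d" using gfR x0R by simp
  then show ?case using x0R unfolding NXe X0 GR0 by (simp add: Rd_iff)
next
  case (Suc t)
  then have IH: "X \<omega> t \<in> Rd d" "GR \<omega> t \<in> Rd d" "NX \<omega> t \<in> Rd d" by auto
  have wl: "\<omega> (Suc t) < n" using Om_lt Suc.prems by simp
  have g1: "GR \<omega> (Suc t) \<in> Rd d"
    unfolding GRSuc using IH gfR gR[OF wl] by (auto simp: Rd_iff)
  have x1: "X \<omega> (Suc t) \<in> Rd d" using IH(3) by (simp only: XSuc)
  have "\<forall>i\<ge>d. NX \<omega> (Suc t) i = 0"
    by (subst NXe) (use x1 g1 in \<open>auto simp: Rd_iff\<close>)
  then show ?case using x1 g1 by (simp add: Rd_iff)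
qed

lemma step_norm: "vnorm d (\<lambda>j. NX \<omega> t j - X \<omega> t j) = gam \<omega> t * vnorm d (GR \<omega> t)"
  using vnorm_scale[of d "- gam \<omega> t" "GR \<omega> t"] gam_nonneg[of \<omega> t]
  by (simp add: NXe)

end


lemma avg_lemma:
  fixes H :: "(nat \<Rightarrow> nat) \<Rightarrow> nat \<Rightarrow> real"
  assumes tT: "t < T" and n1: "1 \<le> n"
    and dp: "\<And>\<omega> \<omega>' i. (\<forall>s<t. \<omega> s = \<omega>' s) \<Longrightarrow> H \<omega> i = H \<omega>' i"
  shows "(\<Sum>\<omega>\<in>{..<T} \<rightarrow>\<^sub>E {..<n}. H \<omega> (\<omega> t)) = (\<Sum>\<omega>\<in>{..<T} \<rightarrow>\<^sub>E {..<n}. (\<Sum>i<n. H \<omega> i) / real n)"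
proof -
  let ?O = "{..<T} \<rightarrow>\<^sub>E {..<n}"
  have fin: "finite ?O" by (simp add: finite_PiE)
  have upd: "\<omega>(t := i) \<in> ?O" if "\<omega> \<in> ?O" "i < n" for \<omega> i
    using that tT by (auto simp: PiE_def Pi_def extensional_def)
  have swap: "(\<Sum>\<omega>\<in>?O. if \<omega> t = i then H \<omega> k else 0) = (\<Sum>\<omega>\<in>?O. if \<omega> t = j then H \<omega> k else 0)"
    if ij: "i < n" "j < n" for i j k
  proof -
    have "(\<Sum>\<omega>\<in>{\<omega>\<in>?O. \<omega> t = i}. H \<omega> k) = (\<Sum>\<omega>\<in>{\<omega>\<in>?O. \<omega> t = j}. H \<omega> k)"
    proof (rule sum.reindex_bij_witness[where i = "\<lambda>\<omega>. \<omega>(t := i)" and j = "\<lambda>\<omega>. \<omega>(t := j)"])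
      fix a assume "a \<in> {\<omega>\<in>?O. \<omega> t = i}"
      then show "a(t := j, t := i) = a" by auto
    next
      fix a assume "a \<in> {\<omega>\<in>?O. \<omega> t = i}"
      then show "a(t := j) \<in> {\<omega>\<in>?O. \<omega> t = j}" using upd ij by auto
    next
      fix b assume "b \<in> {\<omega>\<in>?O. \<omega> t = j}"
      then show "b(t := i, t := j) = b" by auto
    next
      fix b assume "b \<in> {\<omega>\<in>?O. \<omega> t = j}"
      then show "b(t := i) \<in> {\<omega>\<in>?O. \<omega> t = i}" using upd ij by auto
    next
      fix a assume "a \<in> {\<omega>\<in>?O. \<omega> t = i}"
      show "H (a(t := j)) k = H a k" by (rule dp) auto
    qed
    then show ?thesis using fin by (simp add: sum.inter_filter)
  qed
  have one: "(\<Sum>j<n. if \<omega> t = j then F j else 0) = F (\<omega> t)" if "\<omega> \<in> ?O" for \<omega> and F :: "nat \<Rightarrow> real"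
  proof -
    have "\<omega> t < n" using that tT by (auto simp: PiE_def Pi_def)
    then show ?thesis by (simp add: sum.delta)
  qed
  have "(\<Sum>\<omega>\<in>?O. H \<omega> (\<omega> t)) = (\<Sum>\<omega>\<in>?O. \<Sum>i<n. if \<omega> t = i then H \<omega> i else 0)"
    using one by (intro sum.cong) auto
  also have "\<dots> = (\<Sum>i<n. \<Sum>\<omega>\<in>?O. if \<omega> t = i then H \<omega> i else 0)" by (rule sum.swap)
  also have "\<dots> = (\<Sum>i<n. (1 / real n) * (\<Sum>j<n. \<Sum>\<omega>\<in>?O. if \<omega> t = j then H \<omega> i else 0))"
  proof (intro sum.cong refl)
    fix i assume i: "i \<in> {..<n}"
    have "(\<Sum>j<n. \<Sum>\<omega>\<in>?O. if \<omega> t = j then H \<omega> i else 0) = (\<Sum>j<n. \<Sum>\<omega>\<in>?O. if \<omega> t = i then H \<omega> i else 0)"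
    proof (rule sum.cong[OF refl])
      fix j assume "j \<in> {..<n}"
      then show "(\<Sum>\<omega>\<in>?O. if \<omega> t = j then H \<omega> i else 0) = (\<Sum>\<omega>\<in>?O. if \<omega> t = i then H \<omega> i else 0)"
        using swap[of j i i] i by simp
    qed
    also have "\<dots> = real n * (\<Sum>\<omega>\<in>?O. if \<omega> t = i then H \<omega> i else 0)" by simp
    finally show "(\<Sum>\<omega>\<in>?O. if \<omega> t = i then H \<omega> i else 0) = (1 / real n) * (\<Sum>j<n. \<Sum>\<omega>\<in>?O. if \<omega> t = j then H \<omega> i else 0)"
      using n1 by simp
  qed
  also have "\<dots> = (\<Sum>i<n. (1 / real n) * (\<Sum>\<omega>\<in>?O. H \<omega> i))"
  proof (intro sum.cong refl arg_cong2[where f = "(*)"])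
    fix i
    have "(\<Sum>j<n. \<Sum>\<omega>\<in>?O. if \<omega> t = j then H \<omega> i else 0) = (\<Sum>\<omega>\<in>?O. \<Sum>j<n. if \<omega> t = j then H \<omega> i else 0)"
      by (rule sum.swap)
    also have "\<dots> = (\<Sum>\<omega>\<in>?O. H \<omega> i)"
    proof (rule sum.cong[OF refl])
      fix \<omega> assume "\<omega> \<in> ?O"
      then have "\<omega> t < n" using tT by (auto simp: PiE_def Pi_def)
      then show "(\<Sum>j<n. if \<omega> t = j then H \<omega> i else 0) = H \<omega> i" by (simp add: sum.delta)
    qed
    finally show "(\<Sum>j<n. \<Sum>\<omega>\<in>?O. if \<omega> t = j then H \<omega> i else 0) = (\<Sum>\<omega>\<in>?O. H \<omega> i)" .
  qed
  also have "\<dots> = (\<Sum>\<omega>\<in>?O. (\<Sum>i<n. H \<omega> i) / real n)"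
    by (simp add: sum_distrib_left sum_divide_distrib sum.swap[of _ "{..<n}"])
  finally show ?thesis .
qed

lemma shift_sum: "(\<Sum>t<T. if k < t then D (t - 1 - k) else 0) = (\<Sum>s<T - Suc k. (D s :: real))"
proof (induction T)
  case 0 then show ?case by simp
next
  case (Suc T)
  show ?case
  proof (cases "k < T")
    case True
    then have "T - k = Suc (T - Suc k)" by simp
    then show ?thesis using Suc True by simp
  next
    case False
    then have "Suc T - Suc k = T - Suc k" by simp
    then show ?thesis using Suc False by simp
  qed
qed



context ada_setup
begin

definition "ee \<omega> t = (\<lambda>j. GR \<omega> t j - gf (X \<omega> t) j)"
definition "PP \<omega> t = (\<Sum>s<t. gam \<omega> s * vnorm d (GR \<omega> s))"
definition "MM = vnorm d (gf x0)"
definition "xi \<omega> t = (\<lambda>j. (g (\<omega> (Suc t)) (NX \<omega> t) j - g (\<omega> (Suc t)) (X \<omega> t) j)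
                         - (gf (NX \<omega> t) j - gf (X \<omega> t) j))"

lemma ee0: "ee \<omega> 0 = (\<lambda>j. 0)" by (simp add: ee_def X0 GR0)

lemma eeSuc_reset: "Suc t mod n = 0 \<Longrightarrow> ee \<omega> (Suc t) = (\<lambda>j. 0)"
  by (simp add: ee_def XSuc GRSuc)

lemma eeSuc: "Suc t mod n \<noteq> 0 \<Longrightarrow> ee \<omega> (Suc t) = (\<lambda>j. ee \<omega> t j + xi \<omega> t j)"
  by (rule ext) (simp add: ee_def xi_def XSuc GRSuc)

lemma xi_norm: "\<omega> \<in> Om \<Longrightarrow> Suc t < T \<Longrightarrow> vnorm d (xi \<omega> t) \<le> 2 * L * (gam \<omega> t * vnorm d (GR \<omega> t))"
proof -
  assume w: "\<omega> \<in> Om" and t: "Suc t < T"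
  have R: "X \<omega> t \<in> Rd d" "NX \<omega> t \<in> Rd d" using inv[OF w, of t] t by auto
  have "\<omega> (Suc t) < n" using Om_lt[OF w t] .
  from xi_bound[OF this R(2) R(1)] show ?thesis unfolding xi_def step_norm by simp
qed

lemma err_det: "\<omega> \<in> Om \<Longrightarrow> t < T \<Longrightarrow>
   vnorm d (ee \<omega> t) \<le> 2 * L * PP \<omega> t \<and> vnorm d (\<lambda>j. X \<omega> t j - x0 j) \<le> PP \<omega> t"
proof (induction t)
  case 0 then show ?case by (simp add: ee0 X0 PP_def vnorm_zero)
next
  case (Suc t)
  then have IH: "vnorm d (ee \<omega> t) \<le> 2 * L * PP \<omega> t" "vnorm d (\<lambda>j. X \<omega> t j - x0 j) \<le> PP \<omega> t" by auto
  have PS: "PP \<omega> (Suc t) = PP \<omega> t + gam \<omega> t * vnorm d (GR \<omega> t)" by (simp add: PP_def)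
  have x: "vnorm d (\<lambda>j. X \<omega> (Suc t) j - x0 j) \<le> PP \<omega> (Suc t)"
    using vnorm_tri[of d "NX \<omega> t" x0 "X \<omega> t"] IH(2) unfolding PS XSuc step_norm by simp
  have e: "vnorm d (ee \<omega> (Suc t)) \<le> 2 * L * PP \<omega> (Suc t)"
  proof (cases "Suc t mod n = 0")
    case True
    have "0 \<le> PP \<omega> (Suc t)" unfolding PP_def using gam_nonneg by (simp add: sum_nonneg vnorm_nonneg)
    then show ?thesis using True L0 by (simp add: eeSuc_reset vnorm_zero)
  next
    case False
    have "vnorm d (ee \<omega> (Suc t)) \<le> vnorm d (ee \<omega> t) + vnorm d (xi \<omega> t)"
      unfolding eeSuc[OF False] by (rule vnorm_add)
    also have "\<dots> \<le> 2 * L * PP \<omega> t + 2 * L * (gam \<omega> t * vnorm d (GR \<omega> t))"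
      using IH(1) xi_norm[OF Suc.prems] by simp
    finally show ?thesis unfolding PS by (simp add: algebra_simps)
  qed
  show ?case using x e by simp
qed

lemma u_bound: "\<omega> \<in> Om \<Longrightarrow> t < T \<Longrightarrow> vnorm d (GR \<omega> t) \<le> MM + 3 * L * PP \<omega> t"
proof -
  assume w: "\<omega> \<in> Om" and t: "t < T"
  have R: "X \<omega> t \<in> Rd d" using inv[OF w t] by auto
  have "GR \<omega> t = (\<lambda>j. ee \<omega> t j + ((gf (X \<omega> t) j - gf x0 j) + gf x0 j))"
    by (simp add: ee_def)
  then have "vnorm d (GR \<omega> t) = vnorm d (\<lambda>j. ee \<omega> t j + ((gf (X \<omega> t) j - gf x0 j) + gf x0 j))"
    by (simp only:)
  also have "\<dots> \<le> vnorm d (ee \<omega> t) + vnorm d (\<lambda>j. (gf (X \<omega> t) j - gf x0 j) + gf x0 j)"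
    by (rule vnorm_add)
  also have "\<dots> \<le> vnorm d (ee \<omega> t) + (vnorm d (\<lambda>j. gf (X \<omega> t) j - gf x0 j) + MM)"
    unfolding MM_def by (intro add_left_mono vnorm_add)
  also have "\<dots> \<le> 2 * L * PP \<omega> t + (L * PP \<omega> t + MM)"
  proof -
    have "vnorm d (\<lambda>j. gf (X \<omega> t) j - gf x0 j) \<le> L * vnorm d (\<lambda>j. X \<omega> t j - x0 j)"
      by (rule gf_lip[OF R x0R])
    also have "\<dots> \<le> L * PP \<omega> t" using err_det[OF w t] L0 by (simp add: mult_left_mono)
    finally show ?thesis using err_det[OF w t] by simp
  qed
  finally show ?thesis by simp
qed

lemma Q_bound: "\<omega> \<in> Om \<Longrightarrow>
  (\<Sum>s<T. (gam \<omega> s * vnorm d (GR \<omega> s))^2) \<le> 3000 * ln (1 + T*(L/(\<beta>0*G0) + MM/G0)) / (sqrt n * \<beta>0^2)"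
proof -
  assume w: "\<omega> \<in> Om"
  have "(\<Sum>s<T. (ada_step n \<beta>0 G0 (\<Sum>q<Suc s. (vnorm d (GR \<omega> q))^2) * vnorm d (GR \<omega> s))^2)
           \<le> 3000 * ln (1 + T*(L/(\<beta>0*G0) + MM/G0)) / (sqrt n * \<beta>0^2)"
  proof (rule det_bound[OF n1 T1 L0 b0 G0p])
    show "0 \<le> MM" by (simp add: MM_def vnorm_nonneg)
    show "\<And>t. 0 \<le> vnorm d (GR \<omega> t)" by (rule vnorm_nonneg)
    fix t assume "t < T"
    from u_bound[OF w this] show "vnorm d (GR \<omega> t) \<le> MM + 3 * L * (\<Sum>s<t. ada_step n \<beta>0 G0 (\<Sum>q<Suc s. (vnorm d (GR \<omega> q))\<^sup>2) * vnorm d (GR \<omega> s))"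
      unfolding PP_def SSe .
  qed
  then show ?thesis unfolding SSe .
qed

end


context ada_setup
begin

definition "WW t = (\<Sum>\<omega>\<in>Om. (vnorm d (ee \<omega> t))^2)"
definition "DD s = (\<Sum>\<omega>\<in>Om. (gam \<omega> s * vnorm d (GR \<omega> s))^2)"

lemma DD_nonneg: "0 \<le> DD s" unfolding DD_def by (simp add: sum_nonneg)
lemma WW_nonneg: "0 \<le> WW s" unfolding WW_def by (simp add: sum_nonneg)

lemma gsum_zero: "(\<Sum>i<n. (g i a j - g i b j) - (gf a j - gf b j)) = 0"
proof -
  have A: "(\<Sum>i<n. (g i a j - g i b j) - (gf a j - gf b j))
      = (\<Sum>i<n. g i a j) - (\<Sum>i<n. g i b j) - real n * (gf a j - gf b j)"
    by (simp add: sum_subtractf)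
  have B: "gf a j - gf b j = ((\<Sum>i<n. g i a j) - (\<Sum>i<n. g i b j)) / real n"
    unfolding gf_def by (simp add: diff_divide_distrib)
  show ?thesis unfolding A unfolding B using n1 by simp
qed

lemma cross_zero: assumes t: "Suc t < T"
  shows "(\<Sum>\<omega>\<in>Om. vinner d (ee \<omega> t) (xi \<omega> t)) = 0"
proof -
  define H where "H \<omega> i = vinner d (ee \<omega> t) (\<lambda>j. (g i (NX \<omega> t) j - g i (X \<omega> t) j) - (gf (NX \<omega> t) j - gf (X \<omega> t) j))"
    for \<omega> i
  have "(\<Sum>\<omega>\<in>Om. H \<omega> (\<omega> (Suc t))) = (\<Sum>\<omega>\<in>Om. (\<Sum>i<n. H \<omega> i) / real n)"
  proof (rule avg_lemma[OF t n1])
    fix \<omega> \<omega>' :: "nat \<Rightarrow> nat" and i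
    assume "\<forall>s<Suc t. \<omega> s = \<omega>' s"
    then have "st \<omega> t = st \<omega>' t" by (intro dep) auto
    then show "H \<omega> i = H \<omega>' i" by (simp add: H_def ee_def ada_x_def ada_grad_def)
  qed
  moreover have "(\<Sum>i<n. H \<omega> i) = 0" for \<omega>
  proof -
    have "(\<Sum>i<n. H \<omega> i) = vinner d (ee \<omega> t) (\<lambda>j. \<Sum>i<n. (g i (NX \<omega> t) j - g i (X \<omega> t) j) - (gf (NX \<omega> t) j - gf (X \<omega> t) j))"
      unfolding H_def by (rule vinner_sum_right[symmetric])
    also have "(\<lambda>j. \<Sum>i<n. (g i (NX \<omega> t) j - g i (X \<omega> t) j) - (gf (NX \<omega> t) j - gf (X \<omega> t) j)) = (\<lambda>j. 0)"
      by (rule ext) (rule gsum_zero)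
    finally show ?thesis by (simp add: vinner_def)
  qed
  ultimately show ?thesis by (simp add: H_def xi_def)
qed

lemma W_step: assumes t: "Suc t < T" and m: "Suc t mod n \<noteq> 0"
  shows "WW (Suc t) \<le> WW t + 4 * L^2 * DD t"
proof -
  have pw: "(vnorm d (ee \<omega> (Suc t)))^2 \<le> (vnorm d (ee \<omega> t))^2 + 2 * vinner d (ee \<omega> t) (xi \<omega> t)
      + 4 * L^2 * (gam \<omega> t * vnorm d (GR \<omega> t))^2" if w: "\<omega> \<in> Om" for \<omega>
  proof -
    have "(vnorm d (xi \<omega> t))^2 \<le> (2 * L * (gam \<omega> t * vnorm d (GR \<omega> t)))^2"
      using xi_norm[OF w t] by (intro power_mono) (auto simp: vnorm_nonneg)
    then show ?thesis unfolding eeSuc[OF m] vnorm_add_sq by (simp add: power_mult_distrib)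
  qed
  have "WW (Suc t) \<le> (\<Sum>\<omega>\<in>Om. (vnorm d (ee \<omega> t))^2 + 2 * vinner d (ee \<omega> t) (xi \<omega> t)
      + 4 * L^2 * (gam \<omega> t * vnorm d (GR \<omega> t))^2)"
    unfolding WW_def by (rule sum_mono) (rule pw)
  also have "\<dots> = WW t + 2 * (\<Sum>\<omega>\<in>Om. vinner d (ee \<omega> t) (xi \<omega> t)) + 4 * L^2 * DD t"
    unfolding WW_def DD_def by (simp add: sum.distrib sum_distrib_left)
  finally show ?thesis using cross_zero[OF t] by simp
qed

lemma W_bound: "t < T \<Longrightarrow> WW t \<le> 4 * L^2 * (\<Sum>k<t mod n. DD (t - 1 - k))"
proof (induction t)
  case 0 then show ?case by (simp add: WW_def ee0 vnorm_zero)
next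
  case (Suc t)
  have nn: "0 \<le> 4 * L^2 * (\<Sum>k<Suc t mod n. DD (Suc t - 1 - k))"
    by (simp add: sum_nonneg DD_nonneg)
  show ?case
  proof (cases "Suc t mod n = 0")
    case True
    then have "WW (Suc t) = 0" by (simp add: WW_def eeSuc_reset vnorm_zero)
    then show ?thesis using nn by simp
  next
    case False
    then have ms: "Suc t mod n = Suc (t mod n)" by (simp add: mod_Suc split: if_splits)
    have "WW (Suc t) \<le> WW t + 4 * L^2 * DD t" using W_step Suc.prems False by simp
    also have "\<dots> \<le> 4 * L^2 * (\<Sum>k<t mod n. DD (t - 1 - k)) + 4 * L^2 * DD t"
      using Suc by simp
    also have "\<dots> = 4 * L^2 * (\<Sum>k<Suc t mod n. DD (Suc t - 1 - k))"
      unfolding ms sum.lessThan_Suc_shift by (simp add: algebra_simps)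
    finally show ?thesis .
  qed
qed

lemma W_total: "(\<Sum>t<T. WW t) \<le> 4 * L^2 * real n * (\<Sum>s<T. DD s)"
proof -
  have "(\<Sum>t<T. WW t) \<le> (\<Sum>t<T. 4 * L^2 * (\<Sum>k<n. if k < t then DD (t - 1 - k) else 0))"
  proof (rule sum_mono)
    fix t assume "t \<in> {..<T}"
    then have "WW t \<le> 4 * L^2 * (\<Sum>k<t mod n. DD (t - 1 - k))" using W_bound by simp
    also have "(\<Sum>k<t mod n. DD (t - 1 - k)) = (\<Sum>k<t mod n. if k < t then DD (t - 1 - k) else 0)"
      by (intro sum.cong) (auto intro: order.strict_trans2[OF _ mod_less_eq_dividend])
    also have "\<dots> \<le> (\<Sum>k<n. if k < t then DD (t - 1 - k) else 0)"
      using n1 by (intro sum_mono2) (auto simp: DD_nonneg intro: order.strict_trans2[OF _ mod_le_divisor])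
    finally show "WW t \<le> 4 * L^2 * (\<Sum>k<n. if k < t then DD (t - 1 - k) else 0)"
      by (simp add: mult_left_mono)
  qed
  also have "\<dots> = 4 * L^2 * (\<Sum>k<n. \<Sum>t<T. if k < t then DD (t - 1 - k) else 0)"
    by (simp add: sum_distrib_left[symmetric] sum.swap[of _ "{..<T}"])
  also have "\<dots> \<le> 4 * L^2 * (\<Sum>k<n. \<Sum>s<T. DD s)"
  proof (rule mult_left_mono[OF sum_mono])
    fix k
    show "(\<Sum>t<T. if k < t then DD (t - 1 - k) else 0) \<le> (\<Sum>s<T. DD s)"
      unfolding shift_sum by (intro sum_mono2) (auto simp: DD_nonneg)
  qed simp
  also have "\<dots> = 4 * L^2 * real n * (\<Sum>s<T. DD s)" by simp
  finally show ?thesis .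
qed

end


context ada_setup
begin

lemma card_Om: "card Om = n ^ T"
  by (simp add: card_PiE)

lemma main_bound:
  "expect_idx n T (\<lambda>\<omega>. \<Sum>t<T. vnorm d (\<lambda>j. GR \<omega> t j - gf (X \<omega> t) j))
    \<le> 110 * (L * root 4 (real n) * sqrt (real T) / \<beta>0)
        * sqrt (ln (1 + real n * real T * (L / (\<beta>0 * G0) + vnorm d (gf x0) / G0)))"
proof -
  define N where "N = real (card Om)"
  define Z where "Z = real T * (L / (\<beta>0 * G0) + MM / G0)"
  define K where "K = 3000 * ln (1 + Z) / (sqrt n * \<beta>0^2)"
  define ET where "ET t = (\<Sum>\<omega>\<in>Om. vnorm d (ee \<omega> t))" for t
  have N0: "0 < N" unfolding N_def card_Om using n1 by simp
  have fin: "finite Om" by (simp add: finite_PiE)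
  have Z0: "0 \<le> Z" unfolding Z_def MM_def using L0 b0 G0p by (simp add: vnorm_nonneg)
  have sn: "1 \<le> sqrt (real n)" using n1 by simp
  have K0: "0 \<le> K" unfolding K_def using Z0 by simp
  have ET0: "0 \<le> ET t" for t unfolding ET_def by (simp add: sum_nonneg vnorm_nonneg)
  have ETb: "(ET t)^2 \<le> N * WW t" for t
    unfolding ET_def WW_def N_def using sq_sum_le[OF fin, of "\<lambda>\<omega>. vnorm d (ee \<omega> t)"] by simp
  have "(\<Sum>t<T. ET t)^2 \<le> real T * (\<Sum>t<T. (ET t)^2)"
    using sq_sum_le[of "{..<T}" ET] by simp
  also have "\<dots> \<le> real T * (\<Sum>t<T. N * WW t)"
    using ETb by (intro mult_left_mono sum_mono) auto
  also have "\<dots> = real T * N * (\<Sum>t<T. WW t)" by (simp add: sum_distrib_left mult.assoc)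
  also have "\<dots> \<le> real T * N * (4 * L^2 * real n * (\<Sum>s<T. DD s))"
    using W_total N0 by (intro mult_left_mono) auto
  also have "(\<Sum>s<T. DD s) \<le> N * K"
  proof -
    have "(\<Sum>s<T. DD s) = (\<Sum>\<omega>\<in>Om. \<Sum>s<T. (gam \<omega> s * vnorm d (GR \<omega> s))^2)"
      unfolding DD_def by (rule sum.swap)
    also have "\<dots> \<le> (\<Sum>\<omega>\<in>Om. K)"
      using Q_bound unfolding K_def Z_def by (intro sum_mono) auto
    finally show ?thesis unfolding N_def by simp
  qed
  then have "real T * N * (4 * L^2 * real n * (\<Sum>s<T. DD s)) \<le> real T * N * (4 * L^2 * real n * (N * K))"
    using N0 by (intro mult_left_mono) auto
  finally have S2: "(\<Sum>t<T. ET t)^2 \<le> N^2 * (4 * L^2 * real n * real T * K)"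
    by (simp add: power2_eq_square algebra_simps)
  define V where "V = 4 * L^2 * real n * real T * K"
  have V0: "0 \<le> V" unfolding V_def using K0 by simp
  have E_eq: "expect_idx n T (\<lambda>\<omega>. \<Sum>t<T. vnorm d (\<lambda>j. GR \<omega> t j - gf (X \<omega> t) j)) = (\<Sum>t<T. ET t) / N"
    unfolding expect_idx_def ET_def N_def ee_def by (simp add: sum.swap[of _ Om])
  have "((\<Sum>t<T. ET t) / N)^2 \<le> V"
    using S2 N0 unfolding V_def by (simp add: power_divide divide_le_eq mult.commute)
  moreover
  define RHS where "RHS = 110 * (L * root 4 (real n) * sqrt (real T) / \<beta>0)
        * sqrt (ln (1 + real n * real T * (L / (\<beta>0 * G0) + vnorm d (gf x0) / G0)))"
  have RHS0: "0 \<le> RHS" unfolding RHS_def using L0 b0 G0p n1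
    by (intro mult_nonneg_nonneg) (auto simp: vnorm_nonneg)
  have "V \<le> RHS^2"
  proof -
    have r2: "(root 4 (real n))^2 = sqrt (real n)" by (rule root4_sq) simp
    have lnZ: "ln (1 + Z) \<le> ln (1 + real n * real T * (L / (\<beta>0 * G0) + vnorm d (gf x0) / G0))"
    proof -
      have "Z \<le> real n * Z" using n1 Z0 by (simp add: mult_le_cancel_right1)
      then have "ln (1 + Z) \<le> ln (1 + real n * Z)" using Z0 by (intro ln_mono) auto
      then show ?thesis unfolding Z_def MM_def by (simp add: mult.assoc)
    qed
    have lnZ0: "0 \<le> ln (1 + Z)" using Z0 by simp
    have "RHS^2 = 12100 * L^2 * sqrt (real n) * real T * ln (1 + real n * real T * (L / (\<beta>0 * G0) + vnorm d (gf x0) / G0)) / \<beta>0^2"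
    proof -
      have l0: "0 \<le> ln (1 + real n * real T * (L / (\<beta>0 * G0) + vnorm d (gf x0) / G0))"
        using lnZ lnZ0 by linarith
      show ?thesis unfolding RHS_def using l0 r2
        by (simp add: power_mult_distrib power_divide)
    qed
    moreover have "V = 12000 * L^2 * sqrt (real n) * real T * ln (1 + Z) / \<beta>0^2"
    proof -
      have "real n = sqrt (real n) * sqrt (real n)" by simp
      then show ?thesis unfolding V_def K_def using sn b0
        by (simp add: field_simps)
    qed
    moreover have "12000 * L^2 * sqrt (real n) * real T * ln (1 + Z)
        \<le> 12100 * L^2 * sqrt (real n) * real T * ln (1 + real n * real T * (L / (\<beta>0 * G0) + vnorm d (gf x0) / G0))"
      using lnZ lnZ0 by (intro mult_mono) auto
    ultimately show ?thesis using b0 by (simp add: divide_right_mono)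
  qed
  ultimately have "((\<Sum>t<T. ET t) / N)^2 \<le> RHS^2" by linarith
  then have "(\<Sum>t<T. ET t) / N \<le> RHS" using RHS0 by (rule power2_le_imp_le)
  then show ?thesis unfolding E_eq RHS_def .
qed

end

theorem lemma3:
  shows "\<exists>C>0. \<forall>(d::nat) (n::nat) (T::nat) (L::real) (\<beta>0::real) (G0::real)
           (x0::nat \<Rightarrow> real) (f::nat \<Rightarrow> (nat \<Rightarrow> real) \<Rightarrow> real)
           (g::nat \<Rightarrow> (nat \<Rightarrow> real) \<Rightarrow> (nat \<Rightarrow> real)).
     1 \<le> n \<and> 1 \<le> T \<and> 0 \<le> L \<and> 0 < \<beta>0 \<and> 0 < G0 \<and> x0 \<in> Rd d \<and>
     (\<forall>i<n. is_gradient d (f i) (g i) \<and> lipschitz_grad d L (g i))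
     \<longrightarrow>
     (let gf = (\<lambda>x j. (1 / real n) * (\<Sum>i<n. g i x j)) in
       expect_idx n T (\<lambda>\<omega>. \<Sum>t<T.
           vnorm d (\<lambda>j. ada_grad n d gf g \<beta>0 G0 x0 \<omega> t j
                        - gf (ada_x n d gf g \<beta>0 G0 x0 \<omega> t) j))
       \<le> C * (L * root 4 (real n) * sqrt (real T) / \<beta>0)
           * sqrt (ln (1 + real n * real T * (L / (\<beta>0 * G0) + vnorm d (gf x0) / G0))))"
proof (intro exI[of _ 110] conjI allI impI)
  fix d n T :: nat and L \<beta>0 G0 :: real and x0 :: "nat \<Rightarrow> real"
    and f :: "nat \<Rightarrow> (nat \<Rightarrow> real) \<Rightarrow> real" and g :: "nat \<Rightarrow> (nat \<Rightarrow> real) \<Rightarrow> (nat \<Rightarrow> real)"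
  assume h: "1 \<le> n \<and> 1 \<le> T \<and> 0 \<le> L \<and> 0 < \<beta>0 \<and> 0 < G0 \<and> x0 \<in> Rd d \<and>
     (\<forall>i<n. is_gradient d (f i) (g i) \<and> lipschitz_grad d L (g i))"
  interpret A: ada_setup n d T L \<beta>0 G0 x0 f g "\<lambda>x j. (1 / real n) * (\<Sum>i<n. g i x j)"
    using h by unfold_locales auto
  show "let gf = (\<lambda>x j. (1 / real n) * (\<Sum>i<n. g i x j)) in
       expect_idx n T (\<lambda>\<omega>. \<Sum>t<T.
           vnorm d (\<lambda>j. ada_grad n d gf g \<beta>0 G0 x0 \<omega> t j
                        - gf (ada_x n d gf g \<beta>0 G0 x0 \<omega> t) j))
       \<le> 110 * (L * root 4 (real n) * sqrt (real T) / \<beta>0)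
           * sqrt (ln (1 + real n * real T * (L / (\<beta>0 * G0) + vnorm d (gf x0) / G0)))"
    unfolding Let_def by (rule A.main_bound)
qed simp

end
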